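(* Let $n\ge2$, let $G$ be the Lie group of invertible $n\times n$ upper triangular real matrices, and let $Z$ be the center of $G$ (the nonzero real scalar matrices). Then $G/Z$ has the topological $R_\infty$-property.
   Context: For an automorphism $\varphi$ of a group $G$, the $\varphi$-twisted conjugacy classes are the equivalence classes of the relation $x\sim_\varphi y$ iff $y=gx\varphi(g)^{-1}$ for some $g\in G$; $R(\varphi)\in\mathbb{N}\cup\{\infty\}$ is their number. A topological group $G$ has the topological $R_\infty$-property if $R(\varphi)=\infty$ for every automorphism $\varphi$ of $G$ that is a homeomorphism (for a Lie group: every continuous automorphism). *)

theory Defs
  imports "HOL-Analysis.Analysis" "HOL-Algebra.Algebra"
begin

text \<open>Invertible upper triangular real matrices, indexed by a finite linearly ordered type 'n
  (so n = CARD('n)).\<close>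
definition UT_carrier :: "(real^('n::{finite,linorder})^('n::{finite,linorder})) set" where
  "UT_carrier = {A. invertible A \<and> (\<forall>i j. j < i \<longrightarrow> A $ i $ j = 0)}"

definition UT_group :: "(real^('n::{finite,linorder})^('n::{finite,linorder})) monoid" where
  "UT_group = \<lparr>carrier = UT_carrier, mult = (**), one = mat 1\<rparr>"

definition group_center :: "('a, 'b) monoid_scheme \<Rightarrow> 'a set" where
  "group_center G = {z \<in> carrier G. \<forall>g \<in> carrier G. z \<otimes>\<^bsub>G\<^esub> g = g \<otimes>\<^bsub>G\<^esub> z}"

definition quotient_group_topology ::
  "'a topology \<Rightarrow> ('a, 'b) monoid_scheme \<Rightarrow> 'a set \<Rightarrow> 'a set topology" where
  "quotient_group_topology TX G H = topology (\<lambda>U. U \<subseteq> carrier (G Mod H) \<and>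
      openin TX {g \<in> carrier G. r_coset G H g \<in> U})"

lemma istopology_quotient_group_topology:
  "istopology (\<lambda>U. U \<subseteq> carrier (G Mod H) \<and> openin TX {g \<in> carrier G. r_coset G H g \<in> U})"
proof -
  have e1: "\<And>S T. {g \<in> carrier G. r_coset G H g \<in> S \<inter> T} =
        {g \<in> carrier G. r_coset G H g \<in> S} \<inter> {g \<in> carrier G. r_coset G H g \<in> T}" by blast
  have e2: "\<And>K. {g \<in> carrier G. r_coset G H g \<in> \<Union>K} = (\<Union>S\<in>K. {g \<in> carrier G. r_coset G H g \<in> S})" by blast
  show ?thesis unfolding istopology_def e1 e2 by (auto intro!: openin_Int openin_Union)
qed

definition twisted_conj :: "('a, 'b) monoid_scheme \<Rightarrow> ('a \<Rightarrow> 'a) \<Rightarrow> ('a \<times> 'a) set" where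
  "twisted_conj G \<phi> = {(x, y). x \<in> carrier G \<and> y \<in> carrier G \<and>
      (\<exists>g \<in> carrier G. y = g \<otimes>\<^bsub>G\<^esub> x \<otimes>\<^bsub>G\<^esub> inv\<^bsub>G\<^esub> (\<phi> g))}"

definition R_infinite :: "('a, 'b) monoid_scheme \<Rightarrow> ('a \<Rightarrow> 'a) \<Rightarrow> bool" where
  "R_infinite G \<phi> \<longleftrightarrow> infinite (carrier G // twisted_conj G \<phi>)"

definition top_R_infinity :: "('a, 'b) monoid_scheme \<Rightarrow> 'a topology \<Rightarrow> bool" where
  "top_R_infinity G T \<longleftrightarrow>
     (\<forall>\<phi>. \<phi> \<in> iso G G \<and> homeomorphic_map T T \<phi> \<longrightarrow> R_infinite G \<phi>)"

end

theory Submission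
  imports Defs
begin


definition ut :: "real^('n::{finite,linorder})^('n::{finite,linorder}) \<Rightarrow> bool" where
  "ut A \<longleftrightarrow> (\<forall>i j. j < i \<longrightarrow> A $ i $ j = 0)"

lemma perm_exists_less:
  fixes p :: "'n::{finite,linorder} \<Rightarrow> 'n"
  assumes p: "p permutes UNIV" and np: "p \<noteq> id"
  shows "\<exists>i. p i < i"
proof -
  let ?S = "{i. p i \<noteq> i}"
  have ne: "?S \<noteq> {}" using np by (auto simp: fun_eq_iff)
  define m where "m = Max ?S"
  have mS: "m \<in> ?S" unfolding m_def using ne by (intro Max_in) auto
  have inj: "inj p" using p permutes_inj by blast
  have "p (p m) \<noteq> p m" using mS inj by (metis (mono_tags) injD mem_Collect_eq)
  hence "p m \<in> ?S" by simp
  hence "p m \<le> m" unfolding m_def by (intro Max_ge) auto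
  with mS show ?thesis by (intro exI[of _ m]) auto
qed

lemma det_ut:
  fixes A :: "real^('n::{finite,linorder})^('n::{finite,linorder})"
  assumes ld: "ut A"
  shows "det A = prod (\<lambda>i. A$i$i) (UNIV:: 'n set)"
proof -
  let ?U = "UNIV:: 'n set"
  let ?PU = "{p. p permutes ?U}"
  let ?pp = "(\<lambda>p. of_int (sign p) * prod (\<lambda>i. A$i$p i) (UNIV :: 'n set))"
  have fU: "finite ?U"
    by simp
  have id0: "{id} \<subseteq> ?PU"
    by (auto simp: permutes_id)
  have p0: "\<forall>p \<in> ?PU -{id}. ?pp p = 0"
  proof
    fix p
    assume p: "p \<in> ?PU - {id}"
    then obtain i where i: "p i < i"
      using perm_exists_less by blast
    from ld i have "\<exists>i \<in> ?U. A$i$p i = 0"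
      unfolding ut_def by blast
    with prod_zero[OF fU]  show "?pp p = 0"
      by force
  qed
  from sum.mono_neutral_cong_left[OF finite_permutations[OF fU] id0 p0] show ?thesis
    unfolding det_def by (simp add: sign_id)
qed

lemma ut_diag_nz:
  fixes A :: "real^('n::{finite,linorder})^('n::{finite,linorder})"
  assumes "ut A" "invertible A"
  shows "A$i$i \<noteq> 0"
proof -
  have "det A \<noteq> 0" using assms(2) invertible_det_nz by blast
  then have "(\<Prod>i\<in>UNIV. A$i$i) \<noteq> 0" using det_ut[OF assms(1)] by simp
  then show ?thesis by (simp add: prod_zero_iff)
qed

lemma mm_entry: "(A ** B) $ i $ j = (\<Sum>k\<in>UNIV. A$i$k * B$k$j)"
  by (simp add: matrix_matrix_mult_def)

lemma ut_mult:
  fixes A B :: "real^('n::{finite,linorder})^('n::{finite,linorder})"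
  assumes "ut A" "ut B"
  shows "ut (A ** B)"
  unfolding ut_def
proof (intro allI impI)
  fix i j :: 'n assume ji: "j < i"
  have "\<And>k. A$i$k * B$k$j = 0"
  proof -
    fix k :: 'n
    show "A$i$k * B$k$j = 0"
    proof (cases "k < i")
      case True then show ?thesis using assms(1) unfolding ut_def by simp
    next
      case False then have "j < k" using ji by auto
      then show ?thesis using assms(2) unfolding ut_def by simp
    qed
  qed
  then show "(A ** B) $ i $ j = 0" unfolding mm_entry by (intro sum.neutral) blast
qed

lemma ut_mult_diag:
  fixes A B :: "real^('n::{finite,linorder})^('n::{finite,linorder})"
  assumes "ut A" "ut B"
  shows "(A ** B) $ i $ i = A$i$i * B$i$i"
proof -
  have "\<And>k. A$i$k * B$k$i = (if k = i then A$i$i * B$i$i else 0)"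
  proof -
    fix k :: 'n
    show "A$i$k * B$k$i = (if k = i then A$i$i * B$i$i else 0)"
    proof (cases "k < i")
      case True then show ?thesis using assms(1) unfolding ut_def by simp
    next
      case False then have "k = i \<or> i < k" by auto
      then show ?thesis using assms(2) unfolding ut_def by auto
    qed
  qed
  then have "(A ** B) $ i $ i = (\<Sum>k\<in>UNIV. if k = i then A$i$i * B$i$i else 0)"
    unfolding mm_entry by (intro sum.cong refl) 
  then show ?thesis by simp
qed

lemma ut_inv:
  fixes A B :: "real^('n::{finite,linorder})^('n::{finite,linorder})"
  assumes A: "ut A" "invertible A" and AB: "A ** B = mat 1"
  shows "ut B"
  unfolding ut_def
proof (rule ccontr)
  assume "\<not> (\<forall>i j. j < i \<longrightarrow> B $ i $ j = 0)"
  then obtain i0 j where i0: "j < i0" "B$i0$j \<noteq> 0" by blast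
  let ?S = "{i. j < i \<and> B$i$j \<noteq> 0}"
  define m where "m = Max ?S"
  have mS: "m \<in> ?S" unfolding m_def using i0 by (intro Max_in) auto
  have big: "\<And>k. m < k \<Longrightarrow> B$k$j = 0"
  proof (rule ccontr)
    fix k assume "m < k" "B$k$j \<noteq> 0"
    then have "k \<in> ?S" using mS by auto
    then have "k \<le> m" unfolding m_def by (intro Max_ge) auto
    with \<open>m < k\<close> show False by simp
  qed
  have "\<And>k. A$m$k * B$k$j = (if k = m then A$m$m * B$m$j else 0)"
  proof -
    fix k :: 'n
    show "A$m$k * B$k$j = (if k = m then A$m$m * B$m$j else 0)"
    proof (cases "k < m")
      case True then show ?thesis using A(1) unfolding ut_def by simp
    next
      case False then have "k = m \<or> m < k" by auto
      then show ?thesis using big by auto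
    qed
  qed
  then have "(A ** B)$m$j = (\<Sum>k\<in>UNIV. if k = m then A$m$m * B$m$j else 0)"
    unfolding mm_entry by (intro sum.cong refl)
  then have "(A ** B)$m$j = A$m$m * B$m$j" by simp
  also have "\<dots> \<noteq> 0" using mS ut_diag_nz[OF A] by simp
  finally have "(A ** B)$m$j \<noteq> 0" .
  moreover have "m \<noteq> j" using mS less_irrefl by fastforce
  ultimately show False using AB by (simp add: mat_def)
qed



lemma UT_carrier_iff: "A \<in> UT_carrier \<longleftrightarrow> invertible A \<and> ut A"
  by (simp add: UT_carrier_def ut_def)

lemma UT_simps [simp]: "carrier UT_group = UT_carrier" "mult UT_group = (**)" "one UT_group = mat 1"
  by (simp_all add: UT_group_def)

lemma ut_mat1: "ut (mat 1 :: real^('n::{finite,linorder})^('n::{finite,linorder}))"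
  by (simp add: ut_def mat_def)

lemma invertible_mat1: "invertible (mat 1 :: real^('n::{finite,linorder})^('n::{finite,linorder}))"
  unfolding invertible_def by (intro exI[of _ "mat 1"]) simp

lemma UT_group_group: "group (UT_group :: (real^('n::{finite,linorder})^('n::{finite,linorder})) monoid)"
proof (rule groupI)
  fix x y :: "real^('n::{finite,linorder})^('n::{finite,linorder})"
  assume "x \<in> carrier UT_group" "y \<in> carrier UT_group"
  then have "invertible x" "ut x" "invertible y" "ut y" by (simp_all add: UT_carrier_iff)
  then have "invertible (x ** y)" "ut (x ** y)" by (simp_all add: invertible_mult ut_mult)
  then show "x \<otimes>\<^bsub>UT_group\<^esub> y \<in> carrier UT_group"
    by (simp add: UT_carrier_iff)
next
  show "\<one>\<^bsub>UT_group\<^esub> \<in> carrier (UT_group :: (real^('n::{finite,linorder})^('n::{finite,linorder})) monoid)"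
    by (simp add: UT_carrier_iff ut_mat1 invertible_mat1)
next
  fix x y z :: "real^('n::{finite,linorder})^('n::{finite,linorder})"
  show "x \<otimes>\<^bsub>UT_group\<^esub> y \<otimes>\<^bsub>UT_group\<^esub> z = x \<otimes>\<^bsub>UT_group\<^esub> (y \<otimes>\<^bsub>UT_group\<^esub> z)"
    by (simp add: matrix_mul_assoc)
next
  fix x :: "real^('n::{finite,linorder})^('n::{finite,linorder})"
  show "\<one>\<^bsub>UT_group\<^esub> \<otimes>\<^bsub>UT_group\<^esub> x = x" by simp
next
  fix x :: "real^('n::{finite,linorder})^('n::{finite,linorder})"
  assume x: "x \<in> carrier UT_group"
  then have "invertible x" by (simp add: UT_carrier_iff)
  then obtain y where y: "x ** y = mat 1" "y ** x = mat 1"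
    unfolding invertible_def by blast
  have "ut x" using x by (simp add: UT_carrier_iff)
  have "ut y" by (rule ut_inv[OF \<open>ut x\<close> \<open>invertible x\<close> y(1)])
  moreover have "invertible y" using y unfolding invertible_def by blast
  ultimately have "y \<in> carrier UT_group" by (simp add: UT_carrier_iff)
  then show "\<exists>y\<in>carrier UT_group. y \<otimes>\<^bsub>UT_group\<^esub> x = \<one>\<^bsub>UT_group\<^esub>"
    using y(2) by (intro bexI[of _ y]) simp_all
qed

lemma center_normal:
  fixes G (structure)
  assumes "group G"
  shows "group_center G \<lhd> G"
proof -
  interpret group G by fact
  have sub: "subgroup (group_center G) G"
  proof (rule subgroupI)
    show "group_center G \<subseteq> carrier G" by (auto simp: group_center_def)
    show "group_center G \<noteq> {}" using one_closed by (auto simp: group_center_def)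
  next
    fix a assume a: "a \<in> group_center G"
    then have ac: "a \<in> carrier G" and comm: "\<And>g. g \<in> carrier G \<Longrightarrow> a \<otimes> g = g \<otimes> a"
      by (auto simp: group_center_def)
    have "inv a \<otimes> g = g \<otimes> inv a" if g: "g \<in> carrier G" for g
    proof -
      have "inv a \<otimes> g = inv a \<otimes> (g \<otimes> a) \<otimes> inv a" using ac g by (simp add: m_assoc)
      also have "\<dots> = inv a \<otimes> (a \<otimes> g) \<otimes> inv a" using comm g by simp
      also have "\<dots> = g \<otimes> inv a" using ac g by (simp add: m_assoc[symmetric])
      finally show ?thesis .
    qed
    then show "inv a \<in> group_center G" using ac by (auto simp: group_center_def)
  next
    fix a b assume a: "a \<in> group_center G" and b: "b \<in> group_center G"
    then have ac: "a \<in> carrier G" and bc: "b \<in> carrier G"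
      and ca: "\<And>g. g \<in> carrier G \<Longrightarrow> a \<otimes> g = g \<otimes> a"
      and cb: "\<And>g. g \<in> carrier G \<Longrightarrow> b \<otimes> g = g \<otimes> b"
      by (auto simp: group_center_def)
    have "a \<otimes> b \<otimes> g = g \<otimes> (a \<otimes> b)" if g: "g \<in> carrier G" for g
    proof -
      have "a \<otimes> b \<otimes> g = a \<otimes> (g \<otimes> b)" using ac bc g cb by (simp add: m_assoc)
      also have "\<dots> = (a \<otimes> g) \<otimes> b" using ac bc g by (simp add: m_assoc)
      also have "\<dots> = g \<otimes> (a \<otimes> b)" using ac bc g ca by (simp add: m_assoc)
      finally show ?thesis .
    qed
    then show "a \<otimes> b \<in> group_center G" using ac bc by (auto simp: group_center_def)
  qed
  show ?thesis unfolding normal_inv_iff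
  proof (intro conjI ballI sub)
    fix x h assume x: "x \<in> carrier G" and h: "h \<in> group_center G"
    then have hc: "h \<in> carrier G" by (auto simp: group_center_def)
    have "x \<otimes> h \<otimes> inv x = h \<otimes> x \<otimes> inv x" using h x by (auto simp: group_center_def)
    also have "\<dots> = h" using x hc by (simp add: m_assoc)
    finally show "x \<otimes> h \<otimes> inv x \<in> group_center G" using h by simp
  qed
qed

lemma matrix_add_rdistrib: "((B + C) ** A) = (B ** A) + (C ** A)"
  by (vector matrix_matrix_mult_def sum.distrib[symmetric] field_simps)

definition EM :: "'n::{finite,linorder} \<Rightarrow> 'n \<Rightarrow> real^('n::{finite,linorder})^('n::{finite,linorder})" where
  "EM i j = (\<chi> a b. if a = i \<and> b = j then 1 else 0)"

lemma EM_entry [simp]: "EM i j $ a $ b = (if a = i \<and> b = j then 1 else 0)"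
  by (simp add: EM_def)

lemma mult_EM_entry: "(A ** EM i j) $ a $ b = (if b = j then A $ a $ i else 0)"
  by (simp add: mm_entry if_distrib[of "\<lambda>x. _ * x"] cong: if_cong)

lemma EM_mult_entry: "(EM i j ** A) $ a $ b = (if a = i then A $ j $ b else 0)"
  by (simp add: mm_entry if_distrib[of "\<lambda>x. x * _"] cong: if_cong)

lemma EM_EM: "EM i j ** EM k l = (if j = k then EM i l else 0)"
  by (auto simp: vec_eq_iff mult_EM_entry)

definition XM :: "'n::{finite,linorder} \<Rightarrow> 'n \<Rightarrow> real \<Rightarrow> real^('n::{finite,linorder})^('n::{finite,linorder})" where
  "XM i j c = mat 1 + c *\<^sub>R EM i j"

lemma XM_mult: "XM i j a ** XM i j b = XM i j (a + b + (if i = j then a * b else 0))"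
  unfolding XM_def
  by (simp add: matrix_add_ldistrib matrix_add_rdistrib matrix_scalar_ac scalar_matrix_assoc[symmetric] EM_EM algebra_simps)



definition fi :: "'n::{finite,linorder}" where "fi = Min UNIV"
definition la :: "'n::{finite,linorder}" where "la = Max UNIV"

lemma fi_le: "fi \<le> i" unfolding fi_def by simp
lemma le_la: "i \<le> la" unfolding la_def by simp

lemma fi_less_la:
  assumes "CARD('n::{finite,linorder}) \<ge> 2"
  shows "(fi::'n) < la"
proof (rule ccontr)
  assume "\<not> (fi::'n) < la"
  then have lf: "la \<le> (fi::'n)" by simp
  have "\<And>i::'n. i = fi"
  proof -
    fix i :: 'n
    have "fi \<le> i" "i \<le> la" by (rule fi_le, rule le_la)
    then show "i = fi" using lf by simp
  qed
  then have "(UNIV::'n set) = {fi}" by auto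
  then have "CARD('n) = 1" by (metis card.empty card.insert empty_iff finite.emptyI One_nat_def)
  then show False using assms by simp
qed

lemma ut_XM: "i \<le> j \<Longrightarrow> ut (XM i j c)"
  by (auto simp: ut_def XM_def mat_def)

lemma XM_zero: "XM i j 0 = mat 1" by (simp add: XM_def)

lemma XM_carrier_lt: "i < j \<Longrightarrow> XM i j c \<in> UT_carrier"
  unfolding UT_carrier_iff
proof
  assume ij: "i < j"
  then have ne: "i \<noteq> j" using less_irrefl by fastforce
  then have "XM i j c ** XM i j (-c) = mat 1" "XM i j (-c) ** XM i j c = mat 1"
    by (simp_all add: XM_mult XM_zero)
  then show "invertible (XM i j c)" unfolding invertible_def by blast
  show "ut (XM i j c)" using ij by (simp add: ut_XM)
qed

lemma XM_carrier_diag: "c \<noteq> -1 \<Longrightarrow> XM i i c \<in> UT_carrier"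
  unfolding UT_carrier_iff
proof
  assume c: "c \<noteq> -1"
  then have "1 + c \<noteq> 0" by simp
  then have e: "c + (- c / (1 + c)) + c * (- c / (1 + c)) = 0" by (simp add: field_simps)
  have e2: "(- c / (1 + c)) + c + (- c / (1 + c)) * c = 0" using e by (simp add: algebra_simps)
  have "XM i i c ** XM i i (- c / (1 + c)) = XM i i (c + (- c / (1 + c)) + c * (- c / (1 + c)))"
    by (simp add: XM_mult)
  then have 1: "XM i i c ** XM i i (- c / (1 + c)) = mat 1" by (simp only: e XM_zero)
  have "XM i i (- c / (1 + c)) ** XM i i c = XM i i ((- c / (1 + c)) + c + (- c / (1 + c)) * c)"
    by (simp add: XM_mult)
  then have 2: "XM i i (- c / (1 + c)) ** XM i i c = mat 1" by (simp only: e2 XM_zero)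
  note 1 2
  then show "invertible (XM i i c)" unfolding invertible_def by blast
  show "ut (XM i i c)" by (simp add: ut_XM)
qed

lemma mat_scalar_mult: "mat l ** (A :: real^('n::{finite,linorder})^('n::{finite,linorder})) = l *\<^sub>R A"
proof -
  have "mat l = l *\<^sub>R (mat 1 :: real^('n::{finite,linorder})^('n::{finite,linorder}))" by (simp add: vec_eq_iff mat_def)
  then show ?thesis by (simp add: scalar_matrix_assoc[symmetric])
qed

lemma mult_mat_scalar: "(A :: real^('n::{finite,linorder})^('n::{finite,linorder})) ** mat l = l *\<^sub>R A"
proof -
  have "mat l = l *\<^sub>R (mat 1 :: real^('n::{finite,linorder})^('n::{finite,linorder}))" by (simp add: vec_eq_iff mat_def)
  then show ?thesis by (simp add: matrix_scalar_ac)
qed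

lemma scalar_in_center:
  assumes "l \<noteq> 0"
  shows "mat l \<in> group_center (UT_group :: (real^('n::{finite,linorder})^('n::{finite,linorder})) monoid)"
proof -
  have "mat l ** mat (1/l) = l *\<^sub>R (mat (1/l) :: real^('n::{finite,linorder})^('n::{finite,linorder}))"
       "mat (1/l) ** mat l = (1/l) *\<^sub>R (mat l :: real^('n::{finite,linorder})^('n::{finite,linorder}))"
    by (rule mat_scalar_mult)+
  moreover have "l *\<^sub>R (mat (1/l) :: real^('n::{finite,linorder})^('n::{finite,linorder})) = mat 1"
       "(1/l) *\<^sub>R (mat l :: real^('n::{finite,linorder})^('n::{finite,linorder})) = mat 1"
    using assms by (simp_all add: vec_eq_iff mat_def)
  ultimately have "mat l ** mat (1/l) = (mat 1 :: real^('n::{finite,linorder})^('n::{finite,linorder}))"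
       "mat (1/l) ** mat l = (mat 1 :: real^('n::{finite,linorder})^('n::{finite,linorder}))"
    by simp_all
  then have "invertible (mat l :: real^('n::{finite,linorder})^('n::{finite,linorder}))" unfolding invertible_def by blast
  moreover have "ut (mat l :: real^('n::{finite,linorder})^('n::{finite,linorder}))" by (simp add: ut_def mat_def)
  ultimately show ?thesis
    by (auto simp: group_center_def UT_carrier_iff mat_scalar_mult mult_mat_scalar)
qed

lemma comm_EM_of_XM:
  fixes z :: "real^('n::{finite,linorder})^('n::{finite,linorder})"
  assumes "z ** XM i j c = XM i j c ** z" "c \<noteq> 0"
  shows "z ** EM i j = EM i j ** z"
proof -
  have "z + c *\<^sub>R (z ** EM i j) = z + c *\<^sub>R (EM i j ** z)"
    using assms(1) unfolding XM_def
    by (simp add: matrix_add_ldistrib matrix_add_rdistrib matrix_scalar_ac scalar_matrix_assoc[symmetric])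
  then show ?thesis using assms(2) by simp
qed

lemma comm_EM_entries:
  fixes z :: "real^('n::{finite,linorder})^('n::{finite,linorder})"
  assumes "z ** EM i j = EM i j ** z"
  shows "\<And>a. a \<noteq> i \<Longrightarrow> z $ a $ i = 0" "\<And>b. b \<noteq> j \<Longrightarrow> z $ j $ b = 0" "z $ i $ i = z $ j $ j"
proof -
  fix a assume "a \<noteq> i"
  have "(z ** EM i j) $ a $ j = (EM i j ** z) $ a $ j" using assms by simp
  then show "z $ a $ i = 0" using \<open>a \<noteq> i\<close> by (simp add: mult_EM_entry EM_mult_entry)
next
  fix b assume "b \<noteq> j"
  have "(z ** EM i j) $ i $ b = (EM i j ** z) $ i $ b" using assms by simp
  then show "z $ j $ b = 0" using \<open>b \<noteq> j\<close> by (simp add: mult_EM_entry EM_mult_entry)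
next
  have "(z ** EM i j) $ i $ j = (EM i j ** z) $ i $ j" using assms by simp
  then show "z $ i $ i = z $ j $ j" by (simp add: mult_EM_entry EM_mult_entry)
qed

lemma center_scalar:
  assumes "z \<in> group_center (UT_group :: (real^('n::{finite,linorder})^('n::{finite,linorder})) monoid)"
  shows "\<exists>l. l \<noteq> 0 \<and> z = mat l"
proof -
  have zc: "z \<in> UT_carrier" and comm: "\<And>g. g \<in> UT_carrier \<Longrightarrow> z ** g = g ** z"
    using assms by (auto simp: group_center_def)
  have off: "z $ a $ b = 0" if "a \<noteq> b" for a b
  proof -
    have "XM b b 1 \<in> UT_carrier" by (rule XM_carrier_diag) simp
    then have "z ** XM b b 1 = XM b b 1 ** z" by (rule comm)
    then have "z ** EM b b = EM b b ** z"
      by (rule comm_EM_of_XM) simp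
    then show ?thesis using comm_EM_entries(1) that by blast
  qed
  have dg: "z $ a $ a = z $ fi $ fi" for a
  proof (cases "a = fi")
    case False
    then have "fi < a" using fi_le[of a] by auto
    then have "XM fi a 1 \<in> UT_carrier" by (rule XM_carrier_lt)
    then have "z ** XM fi a 1 = XM fi a 1 ** z" by (rule comm)
    then have "z ** EM fi a = EM fi a ** z"
      by (rule comm_EM_of_XM) simp
    then show ?thesis using comm_EM_entries(3) by metis
  qed simp
  have "z = mat (z $ fi $ fi)" using off dg by (auto simp: vec_eq_iff mat_def)
  moreover have "z $ fi $ fi \<noteq> 0" using zc ut_diag_nz by (auto simp: UT_carrier_iff)
  ultimately show ?thesis by blast
qed



definition cr :: "real^('n::{finite,linorder})^('n::{finite,linorder}) \<Rightarrow> real" where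
  "cr g = g $ fi $ fi / g $ la $ la"

definition uu :: "real \<Rightarrow> real^('n::{finite,linorder})^('n::{finite,linorder})" where
  "uu t = XM fi la t"

lemma UT_inv:
  assumes "g \<in> UT_carrier"
  shows "g ** inv\<^bsub>UT_group\<^esub> g = mat 1" "inv\<^bsub>UT_group\<^esub> g ** g = mat 1"
        "inv\<^bsub>UT_group\<^esub> g \<in> UT_carrier"
proof -
  interpret group "UT_group :: (real^('n::{finite,linorder})^('n::{finite,linorder})) monoid" by (rule UT_group_group)
  show "g ** inv\<^bsub>UT_group\<^esub> g = mat 1" "inv\<^bsub>UT_group\<^esub> g ** g = mat 1" "inv\<^bsub>UT_group\<^esub> g \<in> UT_carrier"
    using assms r_inv[of g] l_inv[of g] inv_closed[of g] by simp_all
qed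

lemma UT_diag_mult: "g \<in> UT_carrier \<Longrightarrow> h \<in> UT_carrier \<Longrightarrow> (g ** h) $ i $ i = g $ i $ i * h $ i $ i"
  by (simp add: UT_carrier_iff ut_mult_diag)

lemma UT_diag_nz: "g \<in> UT_carrier \<Longrightarrow> g $ i $ i \<noteq> 0"
  by (simp add: UT_carrier_iff ut_diag_nz)

lemma UT_diag_inv: "g \<in> UT_carrier \<Longrightarrow> (inv\<^bsub>UT_group\<^esub> g) $ i $ i = 1 / g $ i $ i"
proof -
  assume g: "g \<in> UT_carrier"
  have "(g ** inv\<^bsub>UT_group\<^esub> g) $ i $ i = 1" using UT_inv[OF g] by (simp add: mat_def)
  then have "g $ i $ i * (inv\<^bsub>UT_group\<^esub> g) $ i $ i = 1" using UT_diag_mult[OF g UT_inv(3)[OF g]] by simp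
  then show ?thesis using UT_diag_nz[OF g] by (simp add: field_simps)
qed

lemma cr_mult: "g \<in> UT_carrier \<Longrightarrow> h \<in> UT_carrier \<Longrightarrow> cr (g ** h) = cr g * cr h"
  by (simp add: cr_def UT_diag_mult)

lemma cr_scale: "l \<noteq> 0 \<Longrightarrow> cr (l *\<^sub>R g) = cr g"
  by (simp add: cr_def)

lemma cr_nz: "g \<in> UT_carrier \<Longrightarrow> cr g \<noteq> 0"
  by (simp add: cr_def UT_diag_nz)

lemma cr_inv: "g \<in> UT_carrier \<Longrightarrow> cr (inv\<^bsub>UT_group\<^esub> g) = 1 / cr g"
  by (simp add: cr_def UT_diag_inv)

lemma ut_EE_left: "ut K \<Longrightarrow> K ** EM fi la = K $ fi $ fi *\<^sub>R EM fi la"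
proof -
  assume K: "ut K"
  have z: "K $ a $ fi = 0" if "a \<noteq> fi" for a
  proof -
    have "fi < a" using fi_le[of a] that by simp
    then show ?thesis using K unfolding ut_def by blast
  qed
  then show ?thesis by (auto simp: vec_eq_iff mult_EM_entry)
qed

lemma ut_EE_right: "ut K \<Longrightarrow> EM fi la ** K = K $ la $ la *\<^sub>R EM fi la"
proof -
  assume K: "ut K"
  have z: "K $ la $ b = 0" if "b \<noteq> la" for b
  proof -
    have "b < la" using le_la[of b] that by simp
    then show ?thesis using K unfolding ut_def by blast
  qed
  then show ?thesis by (auto simp: vec_eq_iff EM_mult_entry)
qed

lemma uu_comm:
  assumes "ut K" "K $ fi $ fi = K $ la $ la"
  shows "uu t ** K = K ** uu t"
  unfolding uu_def XM_def
  using assms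
  by (simp add: matrix_add_ldistrib matrix_add_rdistrib matrix_scalar_ac scalar_matrix_assoc[symmetric]
      ut_EE_left ut_EE_right)

lemma uu_conj:
  assumes g: "g \<in> UT_carrier"
  shows "g ** uu t ** inv\<^bsub>UT_group\<^esub> g = uu (cr g * t)"
proof -
  let ?h = "inv\<^bsub>UT_group\<^esub> g"
  have h: "?h \<in> UT_carrier" "g ** ?h = mat 1" using UT_inv[OF g] by auto
  have utg: "ut g" "ut ?h" using g h by (auto simp: UT_carrier_iff)
  have "g ** uu t ** ?h = g ** ?h + t *\<^sub>R ((g ** EM fi la) ** ?h)"
    unfolding uu_def XM_def
    by (simp add: matrix_add_ldistrib matrix_add_rdistrib matrix_scalar_ac scalar_matrix_assoc[symmetric])
  also have "\<dots> = mat 1 + (t * g $ fi $ fi * ?h $ la $ la) *\<^sub>R EM fi la"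
    using utg h(2)
    by (simp add: ut_EE_left ut_EE_right scalar_matrix_assoc[symmetric] matrix_mul_assoc[symmetric])
  also have "\<dots> = uu (cr g * t)"
    unfolding uu_def XM_def cr_def using UT_diag_inv[OF g, of la] by simp
  finally show ?thesis .
qed

lemma uu_add:
  assumes "CARD('n::{finite,linorder}) \<ge> 2"
  shows "(uu s :: real^('n::{finite,linorder})^('n::{finite,linorder})) ** uu t = uu (s + t)"
proof -
  have "(fi::'n) \<noteq> la" using fi_less_la[OF assms] less_irrefl by fastforce
  then show ?thesis unfolding uu_def by (simp add: XM_mult)
qed

lemma uu_carrier:
  assumes "CARD('n::{finite,linorder}) \<ge> 2"
  shows "(uu s :: real^('n::{finite,linorder})^('n::{finite,linorder})) \<in> UT_carrier"
  using fi_less_la[OF assms] unfolding uu_def by (simp add: XM_carrier_lt)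

lemma commutator_props:
  assumes a: "a \<in> UT_carrier" and b: "b \<in> UT_carrier"
  defines "K \<equiv> a ** b ** inv\<^bsub>UT_group\<^esub> a ** inv\<^bsub>UT_group\<^esub> b"
  shows "K \<in> UT_carrier" "K $ i $ i = 1"
proof -
  interpret group "UT_group :: (real^('n::{finite,linorder})^('n::{finite,linorder})) monoid" by (rule UT_group_group)
  have ia: "inv\<^bsub>UT_group\<^esub> a \<in> UT_carrier" and ib: "inv\<^bsub>UT_group\<^esub> b \<in> UT_carrier"
    using a b by (auto intro: UT_inv)
  define ab where "ab = a ** b"
  define abA where "abA = ab ** inv\<^bsub>UT_group\<^esub> a"
  have abc: "ab \<in> UT_carrier" unfolding ab_def using a b m_closed by simp
  have abAc: "abA \<in> UT_carrier" unfolding abA_def using abc ia m_closed by simp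
  have KK: "K = abA ** inv\<^bsub>UT_group\<^esub> b" unfolding K_def abA_def ab_def ..
  show Kc: "K \<in> UT_carrier" unfolding KK using abAc ib m_closed by simp
  have "K $ i $ i = abA $ i $ i * (inv\<^bsub>UT_group\<^esub> b) $ i $ i"
    unfolding KK by (rule UT_diag_mult[OF abAc ib])
  also have "abA $ i $ i = ab $ i $ i * (inv\<^bsub>UT_group\<^esub> a) $ i $ i"
    unfolding abA_def by (rule UT_diag_mult[OF abc ia])
  also have "ab $ i $ i = a $ i $ i * b $ i $ i"
    unfolding ab_def by (rule UT_diag_mult[OF a b])
  finally have "K $ i $ i = a $ i $ i * b $ i $ i * (1 / a $ i $ i) * (1 / b $ i $ i)"
    using UT_diag_inv[OF a, of i] UT_diag_inv[OF b, of i] by simp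
  then show "K $ i $ i = 1" using UT_diag_nz[OF a, of i] UT_diag_nz[OF b, of i] by simp
qed



lemma ring_hom_real_id:
  fixes M :: "real \<Rightarrow> real"
  assumes add: "\<And>x y. M (x + y) = M x + M y"
    and mul: "\<And>x y. M (x * y) = M x * M y"
    and one: "M 1 = 1"
  shows "M x = x"
proof -
  have M0: "M 0 = 0" using add[of 0 0] by simp
  have Mneg: "M (- y) = - M y" for y using add[of y "- y"] M0 by simp
  have Mdiff: "M (a - b) = M a - M b" for a b using add[of a "- b"] Mneg[of b] by simp
  have pos: "M y \<ge> 0" if "y \<ge> 0" for y
  proof -
    have "M y = M (sqrt y * sqrt y)" using that by simp
    also have "\<dots> = M (sqrt y) * M (sqrt y)" by (rule mul)
    finally show ?thesis by simp
  qed
  have mono: "M a \<le> M b" if "a \<le> b" for a b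
    using pos[of "b - a"] that Mdiff[of b a] by simp
  have Mnat: "M (of_nat n) = of_nat n" for n
    by (induction n) (simp_all add: M0 add one)
  have Mint: "M (of_int k) = of_int k" for k
  proof (cases "k \<ge> 0")
    case True then show ?thesis using Mnat[of "nat k"] by simp
  next
    case False then show ?thesis using Mnat[of "nat (- k)"] Mneg[of "of_int (- k)"] by simp
  qed
  have Mn: "M (of_nat n * y) = of_nat n * M y" for n y using mul Mnat by simp
  show ?thesis
  proof (rule ccontr)
    assume ne: "M x \<noteq> x"
    show False
    proof (cases "M x > x")
      case True
      obtain n :: nat where n: "real n * (M x - x) > 1"
        using reals_Archimedean3[of "M x - x"] True by auto
      define k where "k = \<lfloor>real n * x\<rfloor>"
      have k1: "real n * x < of_int k + 1" unfolding k_def by linarith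
      have "real n * M x = M (real n * x)" using Mn by simp
      also have "\<dots> \<le> M (of_int k + 1)" using k1 by (intro mono) simp
      also have "\<dots> = of_int k + 1" using Mint[of "k + 1"] by simp
      also have "\<dots> \<le> real n * x + 1" unfolding k_def by linarith
      finally have "real n * (M x - x) \<le> 1" by (simp add: algebra_simps)
      with n show False by simp
    next
      case False
      then have lt: "M x < x" using ne by simp
      obtain n :: nat where n: "real n * (x - M x) > 1"
        using reals_Archimedean3[of "x - M x"] lt by auto
      define k where "k = \<lfloor>real n * x\<rfloor>"
      have k1: "of_int k \<le> real n * x" unfolding k_def by linarith
      have "of_int k = M (of_int k)" using Mint by simp
      also have "\<dots> \<le> M (real n * x)" using k1 by (intro mono) simp
      also have "\<dots> = real n * M x" using Mn by simp
      finally have "real n * x - 1 < real n * M x" unfolding k_def by linarith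
      then have "real n * (x - M x) < 1" by (simp add: algebra_simps)
      with n show False by simp
    qed
  qed
qed



definition UTZ :: "(real^('n::{finite,linorder})^('n::{finite,linorder})) set" where
  "UTZ = group_center (UT_group :: (real^('n::{finite,linorder})^('n::{finite,linorder})) monoid)"

definition UTQ :: "(real^('n::{finite,linorder})^('n::{finite,linorder})) set monoid" where
  "UTQ = UT_group Mod UTZ"

definition cs :: "real^('n::{finite,linorder})^('n::{finite,linorder}) \<Rightarrow> (real^('n::{finite,linorder})^('n::{finite,linorder})) set" where
  "cs g = UTZ #>\<^bsub>UT_group\<^esub> g"

lemma UTZ_normal: "UTZ \<lhd> (UT_group :: (real^('n::{finite,linorder})^('n::{finite,linorder})) monoid)"
  unfolding UTZ_def by (rule center_normal[OF UT_group_group])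

lemma UTZ_subgroup: "subgroup UTZ (UT_group :: (real^('n::{finite,linorder})^('n::{finite,linorder})) monoid)"
  by (rule normal_imp_subgroup[OF UTZ_normal])

lemma UTQ_group: "group (UTQ :: (real^('n::{finite,linorder})^('n::{finite,linorder})) set monoid)"
  unfolding UTQ_def by (rule normal.factorgroup_is_group[OF UTZ_normal])

lemma UTQ_carrier: "carrier (UTQ :: (real^('n::{finite,linorder})^('n::{finite,linorder})) set monoid) = cs ` UT_carrier"
  unfolding UTQ_def cs_def by (simp add: carrier_FactGroup)

lemma UTQ_mult:
  assumes "a \<in> UT_carrier" "b \<in> UT_carrier"
  shows "cs a \<otimes>\<^bsub>UTQ\<^esub> cs b = cs (a ** (b :: real^('n::{finite,linorder})^('n::{finite,linorder})))"
  using normal.rcos_sum[OF UTZ_normal, of a b] assms unfolding UTQ_def cs_def by simp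

lemma UTQ_inv:
  assumes "a \<in> UT_carrier"
  shows "inv\<^bsub>UTQ\<^esub> cs a = cs (inv\<^bsub>UT_group\<^esub> (a :: real^('n::{finite,linorder})^('n::{finite,linorder})))"
proof -
  have "cs a \<in> carrier UTQ" using assms by (simp add: UTQ_carrier)
  then have "inv\<^bsub>UTQ\<^esub> cs a = set_inv\<^bsub>UT_group\<^esub> (cs a)"
    using normal.inv_FactGroup[OF UTZ_normal] unfolding UTQ_def by blast
  also have "\<dots> = cs (inv\<^bsub>UT_group\<^esub> a)"
    using normal.rcos_inv[OF UTZ_normal, of a] assms unfolding cs_def by simp
  finally show ?thesis .
qed

lemma UTZ_sub: "UTZ \<subseteq> carrier (UT_group :: (real^('n::{finite,linorder})^('n::{finite,linorder})) monoid)"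
  by (rule subgroup.subset[OF UTZ_subgroup])

lemma UTQ_one: "\<one>\<^bsub>UTQ\<^esub> = cs (mat 1 :: real^('n::{finite,linorder})^('n::{finite,linorder}))"
proof -
  have "UTZ #>\<^bsub>UT_group\<^esub> \<one>\<^bsub>UT_group\<^esub> = (UTZ :: (real^('n::{finite,linorder})^('n::{finite,linorder})) set)"
    by (rule group.coset_mult_one[OF UT_group_group UTZ_sub])
  then show ?thesis unfolding UTQ_def cs_def by simp
qed

lemma cs_mem: "g \<in> UT_carrier \<Longrightarrow> g \<in> cs (g :: real^('n::{finite,linorder})^('n::{finite,linorder}))"
  unfolding cs_def using group.rcos_self[OF UT_group_group _ UTZ_subgroup, of g] by simp

lemma cs_elem: "h \<in> cs g \<Longrightarrow> \<exists>l. l \<noteq> 0 \<and> h = l *\<^sub>R (g :: real^('n::{finite,linorder})^('n::{finite,linorder}))"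
proof -
  assume "h \<in> cs g"
  then obtain z where z: "z \<in> UTZ" "h = z ** g" unfolding cs_def r_coset_def by auto
  then obtain l where "l \<noteq> 0" "z = mat l" using center_scalar unfolding UTZ_def by blast
  then show ?thesis using z by (auto simp: mat_scalar_mult)
qed

lemma cs_eq: "a \<in> UT_carrier \<Longrightarrow> cs a = cs b \<Longrightarrow> \<exists>l. l \<noteq> 0 \<and> a = l *\<^sub>R (b :: real^('n::{finite,linorder})^('n::{finite,linorder}))"
  using cs_mem cs_elem by metis

lemma cs_scale:
  assumes b: "b \<in> UT_carrier" and l: "l \<noteq> 0"
  shows "cs (l *\<^sub>R b) = cs (b :: real^('n::{finite,linorder})^('n::{finite,linorder}))"
proof -
  interpret group "UT_group :: (real^('n::{finite,linorder})^('n::{finite,linorder})) monoid" by (rule UT_group_group)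
  have sub: "subgroup (UTZ :: (real^('n::{finite,linorder})^('n::{finite,linorder})) set) UT_group"
    by (rule UTZ_subgroup)
  have "mat l \<in> UTZ" using scalar_in_center[OF l] unfolding UTZ_def .
  then have "l *\<^sub>R b \<in> cs b" unfolding cs_def r_coset_def by (auto simp: mat_scalar_mult intro!: bexI[of _ "mat l"])
  then show ?thesis unfolding cs_def using repr_independence[OF _ _ sub] b by (metis UT_simps(1))
qed

definition cqq :: "(real^('n::{finite,linorder})^('n::{finite,linorder})) set \<Rightarrow> real" where
  "cqq Y = cr (SOME h. h \<in> Y)"

lemma cq_cs: "g \<in> UT_carrier \<Longrightarrow> cqq (cs g) = cr g"
proof -
  assume g: "g \<in> UT_carrier"
  have "(SOME h. h \<in> cs g) \<in> cs g" using cs_mem[OF g] by (rule someI)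
  then obtain l where "l \<noteq> 0" "(SOME h. h \<in> cs g) = l *\<^sub>R g" using cs_elem by blast
  then show ?thesis unfolding cqq_def by (simp add: cr_scale)
qed

lemma uinj:
  assumes "CARD('n::{finite,linorder}) \<ge> 2"
    and "cs (uu s :: real^('n::{finite,linorder})^('n::{finite,linorder})) = cs (uu t)"
  shows "s = t"
proof -
  obtain l where l: "l \<noteq> 0" "(uu s :: real^('n::{finite,linorder})^('n::{finite,linorder})) = l *\<^sub>R uu t"
    using cs_eq[OF uu_carrier[OF assms(1)] assms(2)] by blast
  have fl: "(fi::'n) \<noteq> la" using fi_less_la[OF assms(1)] by simp
  have e1: "(uu s :: real^('n::{finite,linorder})^('n::{finite,linorder})) $ fi $ fi = 1"
     "(uu t :: real^('n::{finite,linorder})^('n::{finite,linorder})) $ fi $ fi = 1"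
    using fl by (simp_all add: uu_def XM_def mat_def)
  have "(uu s :: real^('n::{finite,linorder})^('n::{finite,linorder})) $ fi $ fi = l * (uu t :: real^('n::{finite,linorder})^('n::{finite,linorder})) $ fi $ fi"
    using l(2) by simp
  then have "l = 1" using e1 by simp
  have e2: "(uu s :: real^('n::{finite,linorder})^('n::{finite,linorder})) $ fi $ la = s"
     "(uu t :: real^('n::{finite,linorder})^('n::{finite,linorder})) $ fi $ la = t"
    using fl by (simp_all add: uu_def XM_def mat_def)
  have "(uu s :: real^('n::{finite,linorder})^('n::{finite,linorder})) $ fi $ la = l * (uu t :: real^('n::{finite,linorder})^('n::{finite,linorder})) $ fi $ la"
    using l(2) by simp
  then show ?thesis using e2 \<open>l = 1\<close> by simp
qed



definition comms :: "(real^('n::{finite,linorder})^('n::{finite,linorder})) set \<Rightarrow> bool" where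
  "comms S \<longleftrightarrow> (\<forall>A\<in>carrier UTQ. \<forall>B\<in>carrier UTQ.
     S \<otimes>\<^bsub>UTQ\<^esub> (A \<otimes>\<^bsub>UTQ\<^esub> B \<otimes>\<^bsub>UTQ\<^esub> inv\<^bsub>UTQ\<^esub> A \<otimes>\<^bsub>UTQ\<^esub> inv\<^bsub>UTQ\<^esub> B) =
     (A \<otimes>\<^bsub>UTQ\<^esub> B \<otimes>\<^bsub>UTQ\<^esub> inv\<^bsub>UTQ\<^esub> A \<otimes>\<^bsub>UTQ\<^esub> inv\<^bsub>UTQ\<^esub> B) \<otimes>\<^bsub>UTQ\<^esub> S)"

lemma UTG_closed: "a \<in> UT_carrier \<Longrightarrow> b \<in> UT_carrier \<Longrightarrow> a ** b \<in> UT_carrier"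
  using group.subgroup_self[OF UT_group_group] subgroup.m_closed by fastforce

lemma Qcomm_rep:
  assumes a: "a \<in> UT_carrier" and b: "b \<in> UT_carrier"
  shows "cs a \<otimes>\<^bsub>UTQ\<^esub> cs b \<otimes>\<^bsub>UTQ\<^esub> inv\<^bsub>UTQ\<^esub> (cs a) \<otimes>\<^bsub>UTQ\<^esub> inv\<^bsub>UTQ\<^esub> (cs b) =
         cs (a ** b ** inv\<^bsub>UT_group\<^esub> a ** inv\<^bsub>UT_group\<^esub> (b :: real^('n::{finite,linorder})^('n::{finite,linorder})))"
proof -
  have ia: "inv\<^bsub>UT_group\<^esub> a \<in> UT_carrier" and ib: "inv\<^bsub>UT_group\<^esub> b \<in> UT_carrier"
    using UT_inv(3) a b by blast+
  have ab: "a ** b \<in> UT_carrier" using a b by (rule UTG_closed)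
  have aba: "a ** b ** inv\<^bsub>UT_group\<^esub> a \<in> UT_carrier" using ab ia by (rule UTG_closed)
  show ?thesis
    by (simp add: UTQ_inv a b UTQ_mult ab aba ia ib)
qed

lemma comms_uu:
  assumes card: "CARD('n::{finite,linorder}) \<ge> 2"
  shows "comms (cs (uu t :: real^('n::{finite,linorder})^('n::{finite,linorder})))"
  unfolding comms_def
proof (intro ballI)
  fix A B :: "(real^('n::{finite,linorder})^('n::{finite,linorder})) set"
  assume "A \<in> carrier UTQ" "B \<in> carrier UTQ"
  then obtain a b where a: "a \<in> UT_carrier" "A = cs a" and b: "b \<in> UT_carrier" "B = cs b"
    unfolding UTQ_carrier by blast
  define K where "K = a ** b ** inv\<^bsub>UT_group\<^esub> a ** inv\<^bsub>UT_group\<^esub> b"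
  have Kc: "K \<in> UT_carrier" and Kd: "\<And>i. K $ i $ i = 1"
    using commutator_props[OF a(1) b(1)] unfolding K_def by blast+
  have uc: "(uu t :: real^('n::{finite,linorder})^('n::{finite,linorder})) \<in> UT_carrier" by (rule uu_carrier[OF card])
  have "uu t ** K = K ** uu t"
    by (rule uu_comm) (use Kc Kd in \<open>auto simp: UT_carrier_iff\<close>)
  then have "cs (uu t) \<otimes>\<^bsub>UTQ\<^esub> cs K = cs K \<otimes>\<^bsub>UTQ\<^esub> cs (uu t)"
    by (simp add: UTQ_mult uc Kc)
  moreover have "A \<otimes>\<^bsub>UTQ\<^esub> B \<otimes>\<^bsub>UTQ\<^esub> inv\<^bsub>UTQ\<^esub> A \<otimes>\<^bsub>UTQ\<^esub> inv\<^bsub>UTQ\<^esub> B = cs K"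
    unfolding K_def a(2) b(2) by (rule Qcomm_rep[OF a(1) b(1)])
  ultimately show "cs (uu t) \<otimes>\<^bsub>UTQ\<^esub> (A \<otimes>\<^bsub>UTQ\<^esub> B \<otimes>\<^bsub>UTQ\<^esub> inv\<^bsub>UTQ\<^esub> A \<otimes>\<^bsub>UTQ\<^esub> inv\<^bsub>UTQ\<^esub> B) =
       (A \<otimes>\<^bsub>UTQ\<^esub> B \<otimes>\<^bsub>UTQ\<^esub> inv\<^bsub>UTQ\<^esub> A \<otimes>\<^bsub>UTQ\<^esub> inv\<^bsub>UTQ\<^esub> B) \<otimes>\<^bsub>UTQ\<^esub> cs (uu t)"
    by simp
qed

lemma UT_inv_eq:
  assumes "x \<in> UT_carrier" "y \<in> UT_carrier" "y ** x = mat 1"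
  shows "inv\<^bsub>UT_group\<^esub> x = (y :: real^('n::{finite,linorder})^('n::{finite,linorder}))"
  using group.inv_equality[OF UT_group_group, of y x] assms by simp

lemma matrix_sub_ldistrib: "((A::real^'n^'m) ** (B - C)) = (A ** B) - (A ** C)"
  by (simp add: vec_eq_iff matrix_matrix_mult_def sum_subtractf right_diff_distrib)

lemma XM_conj_comm:
  assumes ij: "i \<noteq> j"
  shows "XM i i 1 ** XM i j 1 ** XM i i (-1/2) ** XM i j (-1) = (XM i j 1 :: real^('n::{finite,linorder})^('n::{finite,linorder}))"
proof -
  have e1: "XM i i 1 ** EM i j = 2 *\<^sub>R (EM i j :: real^('n::{finite,linorder})^('n::{finite,linorder}))"
    unfolding XM_def by (simp add: matrix_add_rdistrib scalar_matrix_assoc[symmetric] EM_EM scaleR_2)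
  have e2: "EM i j ** XM i i (-1/2) = (EM i j :: real^('n::{finite,linorder})^('n::{finite,linorder}))"
    unfolding XM_def using ij by (simp add: matrix_add_ldistrib matrix_sub_ldistrib matrix_scalar_ac scalar_matrix_assoc[symmetric] EM_EM)
  have e3: "XM i i 1 ** XM i i (-1/2) = (mat 1 :: real^('n::{finite,linorder})^('n::{finite,linorder}))"
    by (simp add: XM_mult XM_zero)
  have "XM i i 1 ** XM i j 1 ** XM i i (-1/2) = XM i i 1 ** XM i i (-1/2) + (XM i i 1 ** EM i j) ** XM i i (-1/2)"
    by (simp add: XM_def[of i j] matrix_add_ldistrib matrix_add_rdistrib matrix_scalar_ac matrix_mul_assoc)
  also have "\<dots> = (XM i j 2 :: real^('n::{finite,linorder})^('n::{finite,linorder}))"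
    unfolding e1 e3 by (simp only: scalar_matrix_assoc[symmetric] e2) (simp add: XM_def)
  finally have "XM i i 1 ** XM i j 1 ** XM i i (-1/2) = (XM i j 2 :: real^('n::{finite,linorder})^('n::{finite,linorder}))" .
  then show ?thesis using ij by (simp add: XM_mult)
qed

lemma comms_imp_uu:
  assumes card: "CARD('n::{finite,linorder}) \<ge> 2"
    and g: "g \<in> UT_carrier" and cg: "comms (cs (g :: real^('n::{finite,linorder})^('n::{finite,linorder})))"
  shows "\<exists>t. cs g = cs (uu t :: real^('n::{finite,linorder})^('n::{finite,linorder}))"
proof -
  have step1: "g ** EM i j = EM i j ** g" if ij: "i < j" for i j
  proof -
    have ne: "i \<noteq> j" using ij less_irrefl by fastforce
    have Dc: "XM i i 1 \<in> UT_carrier" "XM i i (-1/2) \<in> UT_carrier" by (simp_all add: XM_carrier_diag)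
    have Xc: "XM i j 1 \<in> UT_carrier" "XM i j (-1) \<in> UT_carrier" using ij by (simp_all add: XM_carrier_lt)
    have iD: "inv\<^bsub>UT_group\<^esub> (XM i i 1) = XM i i (-1/2)"
      by (rule UT_inv_eq[OF Dc]) (simp add: XM_mult XM_zero)
    have iX: "inv\<^bsub>UT_group\<^esub> (XM i j 1) = XM i j (-1)"
      by (rule UT_inv_eq[OF Xc]) (use ne in \<open>simp add: XM_mult XM_zero\<close>)
    have commeq: "cs (XM i j 1) = cs (XM i i 1) \<otimes>\<^bsub>UTQ\<^esub> cs (XM i j 1) \<otimes>\<^bsub>UTQ\<^esub> inv\<^bsub>UTQ\<^esub> (cs (XM i i 1)) \<otimes>\<^bsub>UTQ\<^esub> inv\<^bsub>UTQ\<^esub> (cs (XM i j 1))"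
      unfolding Qcomm_rep[OF Dc(1) Xc(1)] iD iX XM_conj_comm[OF ne] ..
    moreover have "cs (XM i i 1) \<in> carrier UTQ" "cs (XM i j 1) \<in> carrier UTQ"
      using Dc Xc by (simp_all add: UTQ_carrier)
    then have "cs g \<otimes>\<^bsub>UTQ\<^esub> (cs (XM i i 1) \<otimes>\<^bsub>UTQ\<^esub> cs (XM i j 1) \<otimes>\<^bsub>UTQ\<^esub> inv\<^bsub>UTQ\<^esub> (cs (XM i i 1)) \<otimes>\<^bsub>UTQ\<^esub> inv\<^bsub>UTQ\<^esub> (cs (XM i j 1)))
       = (cs (XM i i 1) \<otimes>\<^bsub>UTQ\<^esub> cs (XM i j 1) \<otimes>\<^bsub>UTQ\<^esub> inv\<^bsub>UTQ\<^esub> (cs (XM i i 1)) \<otimes>\<^bsub>UTQ\<^esub> inv\<^bsub>UTQ\<^esub> (cs (XM i j 1))) \<otimes>\<^bsub>UTQ\<^esub> cs g"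
      using cg unfolding comms_def by blast
    then have "cs g \<otimes>\<^bsub>UTQ\<^esub> cs (XM i j 1) = cs (XM i j 1) \<otimes>\<^bsub>UTQ\<^esub> cs g"
      by (simp only: commeq[symmetric])
    then have "cs (g ** XM i j 1) = cs (XM i j 1 ** g)" by (simp add: UTQ_mult g Xc)
    moreover have gX: "g ** XM i j 1 \<in> UT_carrier" "XM i j 1 ** g \<in> UT_carrier"
      using g Xc by (simp_all add: UTG_closed)
    ultimately obtain l where l: "l \<noteq> 0" "g ** XM i j 1 = l *\<^sub>R (XM i j 1 ** g)"
      using cs_eq by blast
    have d1: "(XM i j 1 :: real^('n::{finite,linorder})^('n::{finite,linorder})) $ i $ i = 1"
      using ne by (simp add: XM_def mat_def)
    have "(g ** XM i j 1) $ i $ i = g $ i $ i" using UT_diag_mult[OF g Xc(1)] d1 by simp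
    moreover have "(XM i j 1 ** g) $ i $ i = g $ i $ i" using UT_diag_mult[OF Xc(1) g] d1 by simp
    moreover have "(g ** XM i j 1) $ i $ i = l * (XM i j 1 ** g) $ i $ i" using l(2) by simp
    ultimately have "g $ i $ i = l * g $ i $ i" by simp
    then have "l = 1" using UT_diag_nz[OF g, of i] by simp
    then have "g ** XM i j 1 = XM i j 1 ** g" using l(2) by simp
    then show ?thesis by (rule comm_EM_of_XM) simp
  qed
  define c where "c = g $ fi $ fi"
  have c0: "c \<noteq> 0" unfolding c_def by (rule UT_diag_nz[OF g])
  have fl: "(fi::'n) < la" by (rule fi_less_la[OF card])
  have fl': "(fi::'n) \<noteq> la" using fl less_irrefl by fastforce
  have diag: "g $ a $ a = c" for a
  proof (cases "a = fi")
    case False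
    then have "fi < a" using fi_le[of a] by simp
    then show ?thesis unfolding c_def using comm_EM_entries(3)[OF step1[OF \<open>fi < a\<close>]] by simp
  qed (simp add: c_def)
  have off: "g $ a $ b = 0" if "a \<noteq> b" "\<not> (a = fi \<and> b = la)" for a b
  proof (cases "b = la")
    case False
    then have "b < la" using le_la[of b] by simp
    then show ?thesis using comm_EM_entries(1)[OF step1[OF \<open>b < la\<close>]] that(1) by simp
  next
    case True
    then have "a \<noteq> fi" using that by blast
    then have "fi < a" using fi_le[of a] by simp
    then show ?thesis using comm_EM_entries(2)[OF step1[OF \<open>fi < a\<close>], of b] that(1) by simp
  qed
  define t where "t = g $ fi $ la / c"
  have "g = c *\<^sub>R uu t"
  proof (subst vec_eq_iff, intro allI, subst vec_eq_iff, intro allI)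
    fix a b :: 'n
    show "g $ a $ b = (c *\<^sub>R uu t) $ a $ b"
    proof (cases "a = b")
      case True
      then show ?thesis using diag[of a] fl' by (auto simp: uu_def XM_def mat_def)
    next
      case False
      show ?thesis
      proof (cases "a = fi \<and> b = la")
        case True
        then show ?thesis using c0 by (simp add: uu_def XM_def mat_def t_def fl')
      next
        case False
        then show ?thesis using off[OF \<open>a \<noteq> b\<close> False] \<open>a \<noteq> b\<close> by (auto simp: uu_def XM_def mat_def)
      qed
    qed
  qed
  then have "cs g = cs (uu t)" using cs_scale[OF uu_carrier[OF card] c0] by simp
  then show ?thesis by blast
qed



lemma cqq_mult:
  assumes "U \<in> carrier UTQ" "V \<in> carrier UTQ"
  shows "cqq (U \<otimes>\<^bsub>UTQ\<^esub> V) = cqq U * cqq (V :: (real^('n::{finite,linorder})^('n::{finite,linorder})) set)"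
proof -
  obtain a b where a: "a \<in> UT_carrier" "U = cs a" and b: "b \<in> UT_carrier" "V = cs b"
    using assms unfolding UTQ_carrier by blast
  show ?thesis using a b by (simp add: UTQ_mult cq_cs UTG_closed cr_mult)
qed

lemma cqq_inv:
  assumes "U \<in> carrier UTQ"
  shows "cqq (inv\<^bsub>UTQ\<^esub> U) = 1 / cqq (U :: (real^('n::{finite,linorder})^('n::{finite,linorder})) set)"
proof -
  obtain a where a: "a \<in> UT_carrier" "U = cs a"
    using assms unfolding UTQ_carrier by blast
  show ?thesis using a by (simp add: UTQ_inv cq_cs UT_inv(3) cr_inv)
qed

lemma cqq_nz:
  assumes "U \<in> carrier UTQ"
  shows "cqq (U :: (real^('n::{finite,linorder})^('n::{finite,linorder})) set) \<noteq> 0"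
proof -
  obtain a where a: "a \<in> UT_carrier" "U = cs a"
    using assms unfolding UTQ_carrier by blast
  show ?thesis using a by (simp add: cq_cs cr_nz)
qed

lemma diag_witness:
  assumes card: "CARD('n::{finite,linorder}) \<ge> 2" and x: "x \<noteq> 0"
  shows "(XM fi fi (x - 1) :: real^('n::{finite,linorder})^('n::{finite,linorder})) \<in> UT_carrier" "cr (XM fi fi (x - 1) :: real^('n::{finite,linorder})^('n::{finite,linorder})) = x"
proof -
  show "(XM fi fi (x - 1) :: real^('n::{finite,linorder})^('n::{finite,linorder})) \<in> UT_carrier" using x by (intro XM_carrier_diag) simp
  have fl: "(fi::'n) \<noteq> la" using fi_less_la[OF card] less_irrefl by fastforce
  then show "cr (XM fi fi (x - 1) :: real^('n::{finite,linorder})^('n::{finite,linorder})) = x"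
    by (simp add: cr_def XM_def mat_def)
qed

lemma main_R_infinite:
  assumes card: "CARD('n::{finite,linorder}) \<ge> 2"
    and iso: "\<phi> \<in> iso UTQ (UTQ :: (real^('n::{finite,linorder})^('n::{finite,linorder})) set monoid)"
  shows "R_infinite UTQ \<phi>"
proof -
  interpret Q: group "UTQ :: (real^('n::{finite,linorder})^('n::{finite,linorder})) set monoid" by (rule UTQ_group)
  have hom: "\<phi> \<in> hom UTQ UTQ" and bij: "bij_betw \<phi> (carrier UTQ) (carrier UTQ)"
    using iso unfolding iso_def by auto
  have gh: "group_hom UTQ UTQ \<phi>"
    unfolding group_hom_def group_hom_axioms_def using UTQ_group hom by simp
  have phc: "\<phi> U \<in> carrier UTQ" if "U \<in> carrier UTQ" for U :: "(real^('n::{finite,linorder})^('n::{finite,linorder})) set"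
    using hom that unfolding hom_def by auto
  have phm: "\<phi> (U \<otimes>\<^bsub>UTQ\<^esub> V) = \<phi> U \<otimes>\<^bsub>UTQ\<^esub> \<phi> V" if "U \<in> carrier UTQ" "V \<in> carrier UTQ" for U V :: "(real^('n::{finite,linorder})^('n::{finite,linorder})) set"
    using hom that unfolding hom_def by auto
  have phi: "\<phi> (inv\<^bsub>UTQ\<^esub> U) = inv\<^bsub>UTQ\<^esub> (\<phi> U)" if "U \<in> carrier UTQ" for U :: "(real^('n::{finite,linorder})^('n::{finite,linorder})) set"
    using group_hom.hom_inv[OF gh that] .
  have surj: "\<phi> ` carrier UTQ = carrier UTQ" using bij unfolding bij_betw_def by blast
  have inj: "inj_on \<phi> (carrier UTQ)" using bij unfolding bij_betw_def by blast
  have csc: "cs g \<in> carrier UTQ" if "g \<in> UT_carrier" for g :: "real^('n::{finite,linorder})^('n::{finite,linorder})"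
    using that by (simp add: UTQ_carrier)
  have uc: "(uu t :: real^('n::{finite,linorder})^('n::{finite,linorder})) \<in> UT_carrier" for t
    by (rule uu_carrier[OF card])

  have comms_phi: "comms (\<phi> U)" if U: "U \<in> carrier UTQ" "comms U" for U :: "(real^('n::{finite,linorder})^('n::{finite,linorder})) set"
    unfolding comms_def
  proof (intro ballI)
    fix A' B' :: "(real^('n::{finite,linorder})^('n::{finite,linorder})) set" assume "A' \<in> carrier UTQ" "B' \<in> carrier UTQ"
    then have "A' \<in> \<phi> ` carrier UTQ" "B' \<in> \<phi> ` carrier UTQ" using surj by simp_all
    then obtain A B where A: "A \<in> carrier UTQ" "A' = \<phi> A" and B: "B \<in> carrier UTQ" "B' = \<phi> B"
      by (auto elim!: imageE)
    define K where "K = A \<otimes>\<^bsub>UTQ\<^esub> B \<otimes>\<^bsub>UTQ\<^esub> inv\<^bsub>UTQ\<^esub> A \<otimes>\<^bsub>UTQ\<^esub> inv\<^bsub>UTQ\<^esub> B"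
    have Kc: "K \<in> carrier UTQ" unfolding K_def using A(1) B(1) by simp
    have phK: "\<phi> K = A' \<otimes>\<^bsub>UTQ\<^esub> B' \<otimes>\<^bsub>UTQ\<^esub> inv\<^bsub>UTQ\<^esub> A' \<otimes>\<^bsub>UTQ\<^esub> inv\<^bsub>UTQ\<^esub> B'"
      unfolding K_def A(2) B(2) using A(1) B(1) by (simp add: phm phi)
    have "U \<otimes>\<^bsub>UTQ\<^esub> K = K \<otimes>\<^bsub>UTQ\<^esub> U"
      unfolding K_def using U(2)[unfolded comms_def, rule_format, OF A(1) B(1)] .
    then have "\<phi> (U \<otimes>\<^bsub>UTQ\<^esub> K) = \<phi> (K \<otimes>\<^bsub>UTQ\<^esub> U)" by simp
    then have "\<phi> U \<otimes>\<^bsub>UTQ\<^esub> \<phi> K = \<phi> K \<otimes>\<^bsub>UTQ\<^esub> \<phi> U" using U(1) Kc by (simp add: phm)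
    then show "\<phi> U \<otimes>\<^bsub>UTQ\<^esub> (A' \<otimes>\<^bsub>UTQ\<^esub> B' \<otimes>\<^bsub>UTQ\<^esub> inv\<^bsub>UTQ\<^esub> A' \<otimes>\<^bsub>UTQ\<^esub> inv\<^bsub>UTQ\<^esub> B') =
               (A' \<otimes>\<^bsub>UTQ\<^esub> B' \<otimes>\<^bsub>UTQ\<^esub> inv\<^bsub>UTQ\<^esub> A' \<otimes>\<^bsub>UTQ\<^esub> inv\<^bsub>UTQ\<^esub> B') \<otimes>\<^bsub>UTQ\<^esub> \<phi> U"
      by (simp only: phK)
  qed

  have exL: "\<exists>s. \<phi> (cs (uu t)) = cs (uu s :: real^('n::{finite,linorder})^('n::{finite,linorder}))" for t
  proof -
    have "\<phi> (cs (uu t)) \<in> carrier UTQ" using phc csc uc by blast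
    then obtain g where g: "g \<in> UT_carrier" "\<phi> (cs (uu t)) = cs g" unfolding UTQ_carrier by blast
    have "comms (\<phi> (cs (uu t)))" by (rule comms_phi[OF csc[OF uc] comms_uu[OF card]])
    then have "comms (cs g)" using g by simp
    then obtain s where "cs g = cs (uu s :: real^('n::{finite,linorder})^('n::{finite,linorder}))" using comms_imp_uu[OF card g(1)] by blast
    then show ?thesis using g by auto
  qed
  define L where "L t = (SOME s. \<phi> (cs (uu t)) = cs (uu s :: real^('n::{finite,linorder})^('n::{finite,linorder})))" for t
  have L: "\<phi> (cs (uu t)) = cs (uu (L t) :: real^('n::{finite,linorder})^('n::{finite,linorder}))" for t
    unfolding L_def using exL[of t] by (rule someI_ex)
  have Ladd: "L (s + t) = L s + L t" for s t
  proof -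
    have "cs (uu (L (s + t)) :: real^('n::{finite,linorder})^('n::{finite,linorder})) = \<phi> (cs (uu (s + t)))" by (rule L[symmetric])
    also have "\<dots> = \<phi> (cs (uu s) \<otimes>\<^bsub>UTQ\<^esub> cs (uu t))"
      by (simp add: UTQ_mult uc uu_add[OF card])
    also have "\<dots> = cs (uu (L s)) \<otimes>\<^bsub>UTQ\<^esub> cs (uu (L t))" by (simp add: phm csc uc L)
    also have "\<dots> = cs (uu (L s + L t))" by (simp add: UTQ_mult uc uu_add[OF card])
    finally show ?thesis by (rule uinj[OF card])
  qed
  have L0: "L 0 = 0" using Ladd[of 0 0] by simp
  have L1: "L 1 \<noteq> 0"
  proof
    assume "L 1 = 0"
    then have "\<phi> (cs (uu 1)) = \<phi> (cs (uu 0))" using L[of 1] L[of 0] L0 by simp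
    then have "cs (uu 1 :: real^('n::{finite,linorder})^('n::{finite,linorder})) = cs (uu 0)"
      using inj csc uc unfolding inj_on_def by blast
    then have "(1::real) = 0" by (rule uinj[OF card])
    then show False by simp
  qed
  have Lconj: "L (cr g * t) = cr h * L t"
    if g: "g \<in> UT_carrier" and h: "h \<in> UT_carrier" and gh: "\<phi> (cs g) = cs h" for g h :: "real^('n::{finite,linorder})^('n::{finite,linorder})" and t
  proof -
    have "cs (uu (L (cr g * t)) :: real^('n::{finite,linorder})^('n::{finite,linorder})) = \<phi> (cs (uu (cr g * t)))" by (rule L[symmetric])
    also have "cs (uu (cr g * t)) = cs g \<otimes>\<^bsub>UTQ\<^esub> cs (uu t) \<otimes>\<^bsub>UTQ\<^esub> inv\<^bsub>UTQ\<^esub> (cs g)"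
      using g by (simp add: UTQ_mult UTQ_inv uc UTG_closed UT_inv(3) uu_conj)
    also have "\<phi> \<dots> = \<phi> (cs g) \<otimes>\<^bsub>UTQ\<^esub> \<phi> (cs (uu t)) \<otimes>\<^bsub>UTQ\<^esub> inv\<^bsub>UTQ\<^esub> (\<phi> (cs g))"
      using g by (simp add: phm phi csc uc)
    also have "\<dots> = cs h \<otimes>\<^bsub>UTQ\<^esub> cs (uu (L t)) \<otimes>\<^bsub>UTQ\<^esub> inv\<^bsub>UTQ\<^esub> (cs h)" by (simp add: gh L)
    also have "\<dots> = cs (uu (cr h * L t))"
      using h by (simp add: UTQ_mult UTQ_inv uc UTG_closed UT_inv(3) uu_conj)
    finally show ?thesis by (rule uinj[OF card])
  qed
  define M where "M t = L t / L 1" for t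
  have Madd: "M (x + y) = M x + M y" for x y unfolding M_def Ladd by (simp add: add_divide_distrib)
  have M1: "M 1 = 1" unfolding M_def using L1 by simp
  have Mconj: "cr h = M (cr g)"
    if g: "g \<in> UT_carrier" and h: "h \<in> UT_carrier" and gh: "\<phi> (cs g) = cs h" for g h :: "real^('n::{finite,linorder})^('n::{finite,linorder})"
    using Lconj[OF g h gh, of 1] L1 unfolding M_def by simp
  have Mmul: "M (x * y) = M x * M y" for x y
  proof (cases "x = 0")
    case True then show ?thesis using L0 unfolding M_def by simp
  next
    case False
    note w = diag_witness[OF card False]
    obtain h where h: "h \<in> UT_carrier" "\<phi> (cs (XM fi fi (x - 1))) = cs (h :: real^('n::{finite,linorder})^('n::{finite,linorder}))"
      using phc[OF csc[OF w(1)]] unfolding UTQ_carrier by blast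
    have "L (x * y) = cr h * L y" using Lconj[OF w(1) h(1) h(2), of y] w(2) by simp
    moreover have "cr h = M x" using Mconj[OF w(1) h(1) h(2)] w(2) by simp
    ultimately show ?thesis unfolding M_def by simp
  qed
  have Mid: "M x = x" for x by (rule ring_hom_real_id[OF Madd Mmul M1])
  have cinv: "cqq (\<phi> U) = cqq U" if U: "U \<in> carrier UTQ" for U :: "(real^('n::{finite,linorder})^('n::{finite,linorder})) set"
  proof -
    obtain g where g: "g \<in> UT_carrier" "U = cs g" using U unfolding UTQ_carrier by blast
    obtain h where h: "h \<in> UT_carrier" "\<phi> (cs g) = cs (h :: real^('n::{finite,linorder})^('n::{finite,linorder}))"
      using phc[OF csc[OF g(1)]] unfolding UTQ_carrier by blast
    have "cr h = cr g" using Mconj[OF g(1) h(1) h(2)] Mid by simp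
    then show ?thesis using g h by (simp add: cq_cs)
  qed
  define r where "r = twisted_conj UTQ \<phi>"
  have rinv: "cqq V = cqq U" if "(U, V) \<in> r" for U V :: "(real^('n::{finite,linorder})^('n::{finite,linorder})) set"
  proof -
    from that obtain W where U: "U \<in> carrier UTQ" and W: "W \<in> carrier UTQ"
      and V: "V = W \<otimes>\<^bsub>UTQ\<^esub> U \<otimes>\<^bsub>UTQ\<^esub> inv\<^bsub>UTQ\<^esub> (\<phi> W)"
      unfolding r_def twisted_conj_def by blast
    have "cqq V = cqq W * cqq U * (1 / cqq (\<phi> W))"
      unfolding V using U W phc[OF W] by (simp add: cqq_mult cqq_inv)
    also have "\<dots> = cqq U" using cinv[OF W] cqq_nz[OF W] by simp
    finally show ?thesis .
  qed
  have rrefl: "(U, U) \<in> r" if U: "U \<in> carrier UTQ" for U :: "(real^('n::{finite,linorder})^('n::{finite,linorder})) set"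
  proof -
    have "\<phi> \<one>\<^bsub>UTQ\<^esub> = \<one>\<^bsub>UTQ\<^esub>" by (rule group_hom.hom_one[OF gh])
    then have "U = \<one>\<^bsub>UTQ\<^esub> \<otimes>\<^bsub>UTQ\<^esub> U \<otimes>\<^bsub>UTQ\<^esub> inv\<^bsub>UTQ\<^esub> (\<phi> \<one>\<^bsub>UTQ\<^esub>)" using U by simp
    then show ?thesis unfolding r_def twisted_conj_def using U by blast
  qed
  show ?thesis
  proof (unfold R_infinite_def, fold r_def, rule notI)
    assume fin: "finite (carrier UTQ // r)"
    define S where "S = (\<Union>K\<in>carrier UTQ // r. cqq ` K)"
    have fK: "finite (cqq ` K)" if "K \<in> carrier UTQ // r" for K :: "(real^('n::{finite,linorder})^('n::{finite,linorder})) set set"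
    proof -
      from that obtain U where U: "U \<in> carrier UTQ" "K = r `` {U}" unfolding quotient_def by blast
      have "cqq ` K \<subseteq> {cqq U}" using rinv unfolding U(2) by auto
      then show "finite (cqq ` K)" by (rule finite_subset) simp
    qed
    have finS: "finite S" unfolding S_def by (rule finite_UN_I[OF fin fK])
    have "{x::real. x \<noteq> 0} \<subseteq> S"
    proof
      fix x :: real assume "x \<in> {x. x \<noteq> 0}"
      then have x: "x \<noteq> 0" by simp
      note w = diag_witness[OF card x]
      define U where "U = cs (XM fi fi (x - 1) :: real^('n::{finite,linorder})^('n::{finite,linorder}))"
      have Uc: "U \<in> carrier UTQ" unfolding U_def by (rule csc[OF w(1)])
      have "U \<in> r `` {U}" using rrefl[OF Uc] by simp
      moreover have "cqq U = x" using w unfolding U_def by (simp add: cq_cs)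
      ultimately have xi: "x \<in> cqq ` (r `` {U})" by (metis image_eqI)
      have "r `` {U} \<in> carrier UTQ // r" using Uc unfolding quotient_def by blast
      then show "x \<in> S" unfolding S_def using xi by (rule UN_I)
    qed
    moreover have "infinite {x::real. x \<noteq> 0}"
    proof
      assume "finite {x::real. x \<noteq> 0}"
      then have "finite (insert 0 {x::real. x \<noteq> 0})" by simp
      moreover have "insert 0 {x::real. x \<noteq> 0} = UNIV" by auto
      ultimately show False by (simp add: infinite_UNIV_char_0)
    qed
    ultimately have "finite {x::real. x \<noteq> 0}" using finS by (metis finite_subset)
    then show False using \<open>infinite {x::real. x \<noteq> 0}\<close> by blast
  qed
qed


lemma UTQ_eq: "UT_group Mod group_center (UT_group :: (real^('n::{finite,linorder})^('n::{finite,linorder})) monoid)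
  = (UTQ :: (real^('n::{finite,linorder})^('n::{finite,linorder})) set monoid)"
  by (simp add: UTQ_def UTZ_def)

theorem proposition5p4:
  assumes "CARD('n::{finite,linorder}) \<ge> 2"
  shows "top_R_infinity
           (UT_group Mod group_center (UT_group :: (real^('n::{finite,linorder})^('n::{finite,linorder})) monoid))
           (quotient_group_topology (top_of_set (UT_carrier :: (real^('n::{finite,linorder})^('n::{finite,linorder})) set))
              (UT_group :: (real^('n::{finite,linorder})^('n::{finite,linorder})) monoid)
              (group_center (UT_group :: (real^('n::{finite,linorder})^('n::{finite,linorder})) monoid)))"
  unfolding top_R_infinity_def UTQ_eq using main_R_infinite[OF assms] by blast

end
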